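(* Let $n\ge t\ge1$ and write $n=at+b$ with $a\ge 1$ and $0\le b\le t-1$. Let $X_{n,t}$ be the set of integer sequences $i_1<\cdots<i_a$ such that (1) $(j-1)t+b+1\le i_j\le jt$ for $1\le j\le a$, and (2) $i_{j+1}-i_j\le t$ for $1\le j\le a-1$. Then $|X_{n,t}|=\binom{a+t-b-1}{a}$. *)

theory Defs
  imports Main
begin

definition X_set :: "nat \<Rightarrow> nat \<Rightarrow> int list set" where
  "X_set n t = {xs. let a = n div t; b = n mod t in
      length xs = a \<and>
      sorted_wrt (<) xs \<and>
      (\<forall>j\<in>{1..a}. int ((j - 1) * t + b + 1) \<le> xs ! (j - 1) \<and> xs ! (j - 1) \<le> int (j * t)) \<and>
      (\<forall>j\<in>{1..a - 1}. xs ! j - xs ! (j - 1) \<le> int t)}"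

end

theory Submission
  imports Defs
begin

lemma count_sorted:
  fixes A :: "'a::linorder set"
  assumes "finite A"
  shows "card {zs. length zs = k \<and> sorted_wrt (<) zs \<and> set zs \<subseteq> A} = card A choose k"
proof -
  let ?Z = "{zs. length zs = k \<and> sorted_wrt (<) zs \<and> set zs \<subseteq> A}"
  have "bij_betw set ?Z {B. B \<subseteq> A \<and> card B = k}"
  proof (rule bij_betw_imageI)
    show "inj_on set ?Z"
    proof (rule inj_onI)
      fix x y assume "x \<in> ?Z" "y \<in> ?Z" "set x = set y"
      then show "x = y" using strict_sorted_equal by blast
    qed
    show "set ` ?Z = {B. B \<subseteq> A \<and> card B = k}"
    proof (intro equalityI subsetI)
      fix B assume "B \<in> set ` ?Z"
      then obtain zs where zs: "zs \<in> ?Z" "B = set zs" by blast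
      then have "distinct zs" using strict_sorted_iff by blast
      then have "card B = k" using zs distinct_card by fastforce
      then show "B \<in> {B. B \<subseteq> A \<and> card B = k}" using zs by blast
    next
      fix B assume B: "B \<in> {B. B \<subseteq> A \<and> card B = k}"
      then have fB: "finite B" using assms finite_subset by blast
      have "sorted_list_of_set B \<in> ?Z" using B fB by simp
      moreover have "B = set (sorted_list_of_set B)" using fB by simp
      ultimately show "B \<in> set ` ?Z" by blast
    qed
  qed
  then have "card ?Z = card {B. B \<subseteq> A \<and> card B = k}" by (rule bij_betw_same_card)
  then show ?thesis using n_subsets[OF assms] by simp
qed


definition ff :: "nat \<Rightarrow> int list \<Rightarrow> int list" where
  "ff t xs = map (\<lambda>k. int k * (int t + 1) + int t - xs ! k) [0..<length xs]"

lemma ff_len[simp]: "length (ff t xs) = length xs" by (simp add: ff_def)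
lemma ff_nth[simp]: "k < length xs \<Longrightarrow> ff t xs ! k = int k * (int t + 1) + int t - xs ! k"
  by (simp add: ff_def)
lemma ff_ff[simp]: "ff t (ff t xs) = xs"
  by (rule nth_equalityI) auto

lemma sorted_lower:
  assumes "sorted_wrt (<) (zs::int list)" "\<forall>z\<in>set zs. 0 \<le> z"
  shows "k < length zs \<Longrightarrow> int k \<le> zs ! k"
proof (induction k)
  case 0 then show ?case using assms(2) by auto
next
  case (Suc k)
  then have "zs ! k < zs ! Suc k" using assms(1) sorted_wrt_nth_less by fastforce
  then show ?case using Suc by auto
qed

lemma sorted_upper:
  assumes "sorted_wrt (<) (zs::int list)" "\<forall>z\<in>set zs. z \<le> M"
  shows "\<forall>k. k < length zs \<longrightarrow> length zs - 1 - k = m \<longrightarrow> zs ! k + int m \<le> M"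
proof (induction m)
  case 0 then show ?case using assms(2) by auto
next
  case (Suc m)
  show ?case
  proof (intro allI impI)
    fix k assume k: "k < length zs" "length zs - 1 - k = Suc m"
    then have "Suc k < length zs" "length zs - 1 - Suc k = m" by auto
    then have "zs ! Suc k + int m \<le> M" using Suc by blast
    moreover have "zs ! k < zs ! Suc k" using assms(1) sorted_wrt_nth_less \<open>Suc k < length zs\<close> by fastforce
    ultimately show "zs ! k + int (Suc m) \<le> M" by simp
  qed
qed

theorem corollary3p5:
  fixes n t a b :: nat
  assumes "1 \<le> t" and "t \<le> n"
    and "n = a * t + b" and "1 \<le> a" and "b \<le> t - 1"
  shows "card (X_set n t) = (a + t - b - 1) choose a"
proof -
  have bt: "b < t" using assms by linarith
  have nd: "n div t = a" using assms(3) bt by simp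
  have nm: "n mod t = b" using assms(3) bt by simp
  define X' where "X' = {xs::int list. length xs = a \<and> sorted_wrt (<) xs \<and>
     (\<forall>k<a. int k * int t + int b + 1 \<le> xs ! k \<and> xs ! k \<le> int k * int t + int t) \<and>
     (\<forall>k. Suc k < a \<longrightarrow> xs ! Suc k - xs ! k \<le> int t)}"
  define K where "K = a + t - b - 1"
  define A where "A = {0..int K - 1}"
  define Z where "Z = {zs. length zs = a \<and> sorted_wrt (<) zs \<and> set zs \<subseteq> A}"
  have XX: "X_set n t = X'"
  proof (intro equalityI subsetI)
    fix xs assume "xs \<in> X_set n t"
    then have h: "length xs = a" "sorted_wrt (<) xs"
      "\<forall>j\<in>{1..a}. int ((j - 1) * t + b + 1) \<le> xs ! (j - 1) \<and> xs ! (j - 1) \<le> int (j * t)"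
      "\<forall>j\<in>{1..a - 1}. xs ! j - xs ! (j - 1) \<le> int t"
      unfolding X_set_def nd nm Let_def by auto
    have "\<forall>k<a. int k * int t + int b + 1 \<le> xs ! k \<and> xs ! k \<le> int k * int t + int t"
    proof (intro allI impI)
      fix k assume "k < a"
      then have "Suc k \<in> {1..a}" by auto
      then have "int ((Suc k - 1) * t + b + 1) \<le> xs ! (Suc k - 1) \<and> xs ! (Suc k - 1) \<le> int (Suc k * t)"
        using h(3) by blast
      then show "int k * int t + int b + 1 \<le> xs ! k \<and> xs ! k \<le> int k * int t + int t"
        by (simp add: algebra_simps)
    qed
    moreover have "\<forall>k. Suc k < a \<longrightarrow> xs ! Suc k - xs ! k \<le> int t"
    proof (intro allI impI)
      fix k assume "Suc k < a"
      then have "Suc k \<in> {1..a-1}" by auto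
      then show "xs ! Suc k - xs ! k \<le> int t" using h(4) by fastforce
    qed
    ultimately show "xs \<in> X'" using h(1,2) unfolding X'_def by auto
  next
    fix xs assume "xs \<in> X'"
    then have h: "length xs = a" "sorted_wrt (<) xs"
      "\<forall>k<a. int k * int t + int b + 1 \<le> xs ! k \<and> xs ! k \<le> int k * int t + int t"
      "\<forall>k. Suc k < a \<longrightarrow> xs ! Suc k - xs ! k \<le> int t"
      unfolding X'_def by auto
    have "\<forall>j\<in>{1..a}. int ((j - 1) * t + b + 1) \<le> xs ! (j - 1) \<and> xs ! (j - 1) \<le> int (j * t)"
    proof
      fix j assume j: "j \<in> {1..a}"
      then obtain k where k: "j = Suc k" "k < a" by (cases j) auto
      show "int ((j - 1) * t + b + 1) \<le> xs ! (j - 1) \<and> xs ! (j - 1) \<le> int (j * t)"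
      proof -
        have e1: "int ((j - 1) * t + b + 1) = int k * int t + int b + 1" using k by simp
        have e2: "int (j * t) = int k * int t + int t" using k by (simp add: algebra_simps)
        have e3: "xs ! (j - 1) = xs ! k" using k by simp
        show ?thesis unfolding e1 e2 e3 using h(3) k by blast
      qed
    qed
    moreover have "\<forall>j\<in>{1..a - 1}. xs ! j - xs ! (j - 1) \<le> int t"
    proof
      fix j assume j: "j \<in> {1..a-1}"
      then obtain k where k: "j = Suc k" "Suc k < a" by (cases j) auto
      show "xs ! j - xs ! (j - 1) \<le> int t" using h(4) k by auto
    qed
    ultimately show "xs \<in> X_set n t" using h(1,2) unfolding X_set_def nd nm Let_def by auto
  qed
  have toZ: "ff t xs \<in> Z" if "xs \<in> X'" for xs
  proof -
    from that have h: "length xs = a" "sorted_wrt (<) xs"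
      "\<forall>k<a. int k * int t + int b + 1 \<le> xs ! k \<and> xs ! k \<le> int k * int t + int t"
      "\<forall>k. Suc k < a \<longrightarrow> xs ! Suc k - xs ! k \<le> int t"
      unfolding X'_def by auto
    have "sorted_wrt (<) (ff t xs)"
      unfolding sorted_wrt_iff_nth_Suc_transp[OF transp_on_less]
    proof (intro allI impI)
      fix k assume "Suc k < length (ff t xs)"
      then have k: "Suc k < a" using h by simp
      then have "xs ! Suc k - xs ! k \<le> int t" using h(4) by auto
      then show "ff t xs ! k < ff t xs ! Suc k" using k h(1) by (simp add: algebra_simps)
    qed
    moreover have "set (ff t xs) \<subseteq> A"
    proof
      fix z assume "z \<in> set (ff t xs)"
      then obtain k where k: "k < a" "z = ff t xs ! k" using h(1) by (auto simp: in_set_conv_nth)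
      have b1: "int k * int t + int b + 1 \<le> xs ! k" "xs ! k \<le> int k * int t + int t"
        using h(3) k by auto
      have "z = int k * (int t + 1) + int t - xs ! k" using k h(1) by simp
      moreover have "int K = int a + int t - int b - 1" unfolding K_def using assms bt by auto
      moreover have "int k \<le> int a - 1" using k(1) by linarith
      moreover have "int k * (int t + 1) = int k * int t + int k" by (simp add: algebra_simps)
      ultimately have "0 \<le> z \<and> z \<le> int K - 1" using b1 by linarith
      then show "z \<in> A" unfolding A_def by simp
    qed
    ultimately show ?thesis unfolding Z_def using h(1) by auto
  qed
  have toX: "ff t zs \<in> X'" if "zs \<in> Z" for zs
  proof -
    from that have h: "length zs = a" "sorted_wrt (<) zs" "set zs \<subseteq> A" unfolding Z_def by auto
    have KK: "int K = int a + int t - int b - 1" unfolding K_def using assms bt by auto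
    have lo: "int k \<le> zs ! k" if "k < a" for k
    proof -
      have "\<forall>z\<in>set zs. 0 \<le> z" using h(3) unfolding A_def by auto
      then show ?thesis using sorted_lower[OF h(2)] h(1) that by auto
    qed
    have up: "zs ! k \<le> int k + int t - int b - 1" if "k < a" for k
    proof -
      have "\<forall>z\<in>set zs. z \<le> int K - 1" using h(3) unfolding A_def by auto
      then have "zs ! k + int (length zs - 1 - k) \<le> int K - 1"
        using sorted_upper[OF h(2), of "int K - 1" "length zs - 1 - k"] that h(1) by blast
      then show ?thesis using KK h(1) that by auto
    qed
    have "sorted_wrt (<) (ff t zs)"
      unfolding sorted_wrt_iff_nth_Suc_transp[OF transp_on_less]
    proof (intro allI impI)
      fix k assume "Suc k < length (ff t zs)"
      then have k: "Suc k < a" using h by simp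
      have "zs ! Suc k \<le> int k + int t - int b" using up[OF k] by simp
      moreover have "int k \<le> zs ! k" using lo k by auto
      ultimately show "ff t zs ! k < ff t zs ! Suc k" using k h(1) bt by (simp add: algebra_simps)
    qed
    moreover have "\<forall>k<a. int k * int t + int b + 1 \<le> ff t zs ! k \<and> ff t zs ! k \<le> int k * int t + int t"
    proof (intro allI impI)
      fix k assume k: "k < a"
      have e: "ff t zs ! k = int k * int t + int k + int t - zs ! k" using k h(1) by (simp add: algebra_simps)
      show "int k * int t + int b + 1 \<le> ff t zs ! k \<and> ff t zs ! k \<le> int k * int t + int t"
        unfolding e using lo[OF k] up[OF k] by linarith
    qed
    moreover have "\<forall>k. Suc k < a \<longrightarrow> ff t zs ! Suc k - ff t zs ! k \<le> int t"
    proof (intro allI impI)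
      fix k assume k: "Suc k < a"
      have "zs ! k < zs ! Suc k" using h sorted_wrt_nth_less k by fastforce
      then show "ff t zs ! Suc k - ff t zs ! k \<le> int t" using k h(1) by (simp add: algebra_simps)
    qed
    ultimately show ?thesis unfolding X'_def using h(1) by auto
  qed
  have "bij_betw (ff t) X' Z"
    by (rule bij_betw_byWitness[where f'="ff t"]) (auto simp: toZ toX image_subset_iff)
  then have "card X' = card Z" by (rule bij_betw_same_card)
  also have "card Z = card A choose a" unfolding Z_def by (rule count_sorted) (simp add: A_def)
  also have "card A = K" unfolding A_def by simp
  finally have "card X' = K choose a" .
  then show ?thesis unfolding XX K_def .
qed

end
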